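(* Let $f:\{0,1\}^n\to\{0,1\}$ with $f(0^n)=0$, and suppose $f$ has $k$ minimal 1-certificates $c_1,\dots,c_k$ such that for each $i$, the total number of contradictions between $c_i$ and all the other $c_j$ ($j\ne i$) together is at most 2, and such that for each position $p\in[n]$ exactly one of $c_1,\dots,c_k$ assigns the value 1 to $p$. Then $s_0(f)\ge k$.
   Context: A 1-certificate is a partial assignment $c:S\to\{0,1\}$, $S\subseteq[n]$, such that $f(y)=1$ for every $y\in\{0,1\}^n$ agreeing with $c$ on $S$; it is minimal if no restriction of $c$ to a proper subset of $S$ is a 1-certificate. The number of contradictions between two partial assignments is the number of positions where one assigns 1 and the other assigns 0. $s_0(f)=\max\{|\{i: f(x^{\{i\}})\ne f(x)\}| : f(x)=0\}$, where $x^{\{i\}}$ is $x$ with bit $i$ flipped. *)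

theory Defs
  imports Main
begin

(* Inputs of {0,1}^n: functions nat => bool that are False outside {..<n};
   bit value 1 = True, 0 = False. *)
definition cube :: "nat \<Rightarrow> (nat \<Rightarrow> bool) set" where
  "cube n = {x. \<forall>i. n \<le> i \<longrightarrow> \<not> x i}"

definition agrees :: "(nat \<Rightarrow> bool) \<Rightarrow> (nat \<Rightarrow> bool option) \<Rightarrow> bool" where
  "agrees y c \<longleftrightarrow> (\<forall>i b. c i = Some b \<longrightarrow> y i = b)"

definition is_1cert :: "nat \<Rightarrow> ((nat \<Rightarrow> bool) \<Rightarrow> bool) \<Rightarrow> (nat \<Rightarrow> bool option) \<Rightarrow> bool" where
  "is_1cert n f c \<longleftrightarrow> dom c \<subseteq> {..<n} \<and> (\<forall>y\<in>cube n. agrees y c \<longrightarrow> f y)"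

definition is_min_1cert :: "nat \<Rightarrow> ((nat \<Rightarrow> bool) \<Rightarrow> bool) \<Rightarrow> (nat \<Rightarrow> bool option) \<Rightarrow> bool" where
  "is_min_1cert n f c \<longleftrightarrow> is_1cert n f c \<and> (\<forall>S. S \<subset> dom c \<longrightarrow> \<not> is_1cert n f (c |` S))"

definition contradictions :: "(nat \<Rightarrow> bool option) \<Rightarrow> (nat \<Rightarrow> bool option) \<Rightarrow> nat" where
  "contradictions c d = card {i. (c i = Some True \<and> d i = Some False) \<or> (c i = Some False \<and> d i = Some True)}"

definition flip :: "(nat \<Rightarrow> bool) \<Rightarrow> nat \<Rightarrow> (nat \<Rightarrow> bool)" where
  "flip x i = x(i := \<not> x i)"

definition s0 :: "nat \<Rightarrow> ((nat \<Rightarrow> bool) \<Rightarrow> bool) \<Rightarrow> nat" where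
  "s0 n f = Max {card {i\<in>{..<n}. f (flip x i) \<noteq> f x} | x. x \<in> cube n \<and> \<not> f x}"

end

theory Submission
  imports Defs
begin

definition Cp :: "(nat \<Rightarrow> nat \<Rightarrow> bool option) \<Rightarrow> nat set \<Rightarrow> nat \<Rightarrow> (nat \<times> nat) set" where
  "Cp c K i = {(x,q). x \<in> K - {i} \<and> (c i q = Some True \<and> c x q = Some False \<or> c i q = Some False \<and> c x q = Some True)}"

definition hasH :: "(nat \<Rightarrow> nat \<Rightarrow> bool option) \<Rightarrow> nat set \<Rightarrow> nat \<Rightarrow> bool" where
  "hasH c K q \<longleftrightarrow> (\<exists>h\<in>K. c h q = Some False)"

definition goodP :: "(nat \<Rightarrow> nat \<Rightarrow> bool option) \<Rightarrow> nat set \<Rightarrow> nat set \<Rightarrow> bool" where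
  "goodP c K P \<longleftrightarrow>
    (\<forall>q\<in>P. (\<exists>j\<in>K. c j q = Some True) \<and> (\<exists>!h. h \<in> K \<and> c h q = Some False)) \<and>
    (\<forall>i\<in>K. (\<forall>q\<in>P. c i q \<noteq> Some False) \<or>
        ((\<exists>!q. q \<in> P \<and> c i q = Some False) \<and> (\<forall>q. c i q = Some True \<and> hasH c K q \<longrightarrow> q \<in> P))) \<and>
    (\<forall>j\<in>K. \<forall>q1 q2. c j q1 = Some True \<and> c j q2 = Some True \<and> hasH c K q1 \<and> hasH c K q2
        \<and> q1 \<notin> P \<and> q2 \<notin> P \<longrightarrow> q1 = q2)"

definition free :: "(nat \<Rightarrow> nat \<Rightarrow> bool option) \<Rightarrow> nat set \<Rightarrow> nat set \<Rightarrow> nat \<Rightarrow> bool" where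
  "free c K P v \<longleftrightarrow> (\<forall>q\<in>P. c v q \<noteq> Some False) \<and> (\<forall>q. c v q = Some True \<and> hasH c K q \<longrightarrow> q \<in> P)"

definition hyps :: "(nat \<Rightarrow> nat \<Rightarrow> bool option) \<Rightarrow> nat set \<Rightarrow> bool" where
  "hyps c K \<longleftrightarrow> finite K \<and> (\<forall>i\<in>K. finite (dom (c i))) \<and>
     (\<forall>i\<in>K. \<forall>i'\<in>K. \<forall>q. c i q = Some True \<longrightarrow> c i' q = Some True \<longrightarrow> i = i') \<and>
     (\<forall>i\<in>K. card (Cp c K i) \<le> 2)"

lemma Cp_sub: "Cp c K i \<subseteq> K \<times> dom (c i)"
proof
  fix z assume "z \<in> Cp c K i"
  moreover obtain x q where z: "z = (x,q)" by (cases z)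
  ultimately have "x \<in> K" "c i q = Some True \<or> c i q = Some False"
    by (simp_all add: Cp_def) blast+
  then show "z \<in> K \<times> dom (c i)" using z by (auto simp: dom_def)
qed

lemma Cp_fin: "hyps c K \<Longrightarrow> i \<in> K \<Longrightarrow> finite (Cp c K i)"
proof -
  assume h: "hyps c K" "i \<in> K"
  then have "finite (K \<times> dom (c i))" unfolding hyps_def by simp
  then show ?thesis using Cp_sub by (rule finite_subset[rotated])
qed

lemma Cp_mono: "K' \<subseteq> K \<Longrightarrow> Cp c K' i \<subseteq> Cp c K i"
  unfolding Cp_def by auto

lemma hyps_sub: assumes "hyps c K" "K' \<subseteq> K" shows "hyps c K'"
proof -
  have "\<forall>i\<in>K'. card (Cp c K' i) \<le> 2"
  proof
    fix i assume i: "i \<in> K'"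
    then have "card (Cp c K' i) \<le> card (Cp c K i)"
      using assms Cp_fin Cp_mono by (metis card_mono subsetD)
    then show "card (Cp c K' i) \<le> 2" using assms i unfolding hyps_def by force
  qed
  then show ?thesis using assms unfolding hyps_def
    by (metis (no_types, lifting) finite_subset subsetD)
qed

lemma remove_le1:
  assumes "hyps c K" "x \<in> K" "(v,q) \<in> Cp c K x"
  shows "card (Cp c (K-{v}) x) \<le> 1"
proof -
  have "Cp c (K-{v}) x \<subseteq> Cp c K x - {(v,q)}" unfolding Cp_def by auto
  then have "card (Cp c (K-{v}) x) \<le> card (Cp c K x - {(v,q)})"
    using assms Cp_fin by (meson card_mono finite_Diff)
  also have "\<dots> = card (Cp c K x) - 1" using assms by simp
  also have "\<dots> \<le> 1" using assms unfolding hyps_def by force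
  finally show ?thesis .
qed

lemma three:
  assumes "hyps c K" "i \<in> K" "a \<in> Cp c K i" "b \<in> Cp c K i" "d \<in> Cp c K i"
    "a \<noteq> b" "a \<noteq> d" "b \<noteq> d"
  shows False
proof -
  have "card {a,b,d} \<le> card (Cp c K i)" using assms Cp_fin by (intro card_mono) auto
  moreover have "card {a,b,d} = 3" using assms by simp
  ultimately show False using assms unfolding hyps_def by force
qed

lemma step_empty:
  assumes "Cp c K v = {}" "goodP c K P" "v \<in> K"
  shows "free c K P v"
  unfolding free_def
proof safe
  fix q assume q: "q \<in> P" "c v q = Some False"
  then obtain ow where "ow \<in> K" "c ow q = Some True" using assms(2) unfolding goodP_def by blast
  then have "(ow,q) \<in> Cp c K v" using q unfolding Cp_def by auto
  then show False using assms by simp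
next
  fix q assume q: "c v q = Some True" "hasH c K q"
  then obtain h where "h \<in> K" "c h q = Some False" unfolding hasH_def by blast
  then have "(h,q) \<in> Cp c K v" using q unfolding Cp_def by auto
  then show "q \<in> P" using assms by simp
qed

lemma step_in:
  assumes H: "hyps c K" and v: "v \<in> K" and cp: "Cp c K v = {(x,q)}"
    and vq: "c v q = Some True" and xq: "c x q = Some False"
    and g: "goodP c (K-{v}) P'" and fr: "free c (K-{v}) P' x" and x: "x \<in> K"
  shows "goodP c K (insert q P') \<and> free c K (insert q P') v"
proof -
  have xv: "x \<noteq> v" using vq xq by auto
  have uo: "\<And>i i' q. i \<in> K \<Longrightarrow> i' \<in> K \<Longrightarrow> c i q = Some True \<Longrightarrow> c i' q = Some True \<Longrightarrow> i = i'"
    using H unfolding hyps_def by blast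
  have vz: "c v q' \<noteq> Some False" if "ow \<in> K" "c ow q' = Some True" for ow q'
  proof
    assume a: "c v q' = Some False"
    have "ow \<noteq> v" using a that by auto
    then have "(ow,q') \<in> Cp c K v" using a that unfolding Cp_def by auto
    then show False using cp vq a by auto
  qed
  have vo: "h = x \<and> q' = q" if "h \<in> K" "c h q' = Some False" "c v q' = Some True" for h q'
  proof -
    have "h \<noteq> v" using that by auto
    then have "(h,q') \<in> Cp c K v" using that unfolding Cp_def by auto
    then show ?thesis using cp by auto
  qed
  have hK: "hasH c (K-{v}) q'" if "hasH c K q'" "c ow q' = Some True" "ow \<in> K" for q' ow
    using that vz unfolding hasH_def by (metis Diff_iff singletonD)
  from g have ga: "\<forall>q\<in>P'. (\<exists>j\<in>K-{v}. c j q = Some True) \<and> (\<exists>!h. h \<in> K-{v} \<and> c h q = Some False)"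
    and gb: "\<forall>i\<in>K-{v}. (\<forall>q\<in>P'. c i q \<noteq> Some False) \<or>
        ((\<exists>!q. q \<in> P' \<and> c i q = Some False) \<and> (\<forall>q. c i q = Some True \<and> hasH c (K-{v}) q \<longrightarrow> q \<in> P'))"
    and gc: "\<forall>j\<in>K-{v}. \<forall>q1 q2. c j q1 = Some True \<and> c j q2 = Some True \<and> hasH c (K-{v}) q1 \<and> hasH c (K-{v}) q2
        \<and> q1 \<notin> P' \<and> q2 \<notin> P' \<longrightarrow> q1 = q2"
    unfolding goodP_def by blast+
  have fr1: "\<forall>q\<in>P'. c x q \<noteq> Some False" and fr2: "\<forall>q. c x q = Some True \<and> hasH c (K-{v}) q \<longrightarrow> q \<in> P'"
    using fr unfolding free_def by blast+
  have pa: "\<forall>q0\<in>insert q P'. (\<exists>j\<in>K. c j q0 = Some True) \<and> (\<exists>!h. h \<in> K \<and> c h q0 = Some False)"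
  proof
    fix q0 assume q0: "q0 \<in> insert q P'"
    show "(\<exists>j\<in>K. c j q0 = Some True) \<and> (\<exists>!h. h \<in> K \<and> c h q0 = Some False)"
    proof (cases "q0 = q")
      case True
      then show ?thesis using v vq x xq vo by metis
    next
      case False
      then have "q0 \<in> P'" using q0 by simp
      then obtain j where j: "j \<in> K-{v}" "c j q0 = Some True" and u: "\<exists>!h. h \<in> K-{v} \<and> c h q0 = Some False"
        using ga by blast
      have "c v q0 \<noteq> Some False" using vz j by blast
      then have "(\<lambda>h. h \<in> K \<and> c h q0 = Some False) = (\<lambda>h. h \<in> K-{v} \<and> c h q0 = Some False)"
        by auto
      then show ?thesis using j u by auto
    qed
  qed
  have pv: "\<forall>q0\<in>insert q P'. c v q0 \<noteq> Some False"
    using vq ga vz by auto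
  have pb: "\<forall>i\<in>K. (\<forall>q0\<in>insert q P'. c i q0 \<noteq> Some False) \<or>
        ((\<exists>!q0. q0 \<in> insert q P' \<and> c i q0 = Some False) \<and> (\<forall>q0. c i q0 = Some True \<and> hasH c K q0 \<longrightarrow> q0 \<in> insert q P'))"
  proof
    fix i assume i: "i \<in> K"
    show "(\<forall>q0\<in>insert q P'. c i q0 \<noteq> Some False) \<or>
        ((\<exists>!q0. q0 \<in> insert q P' \<and> c i q0 = Some False) \<and> (\<forall>q0. c i q0 = Some True \<and> hasH c K q0 \<longrightarrow> q0 \<in> insert q P'))"
    proof (cases "i = v")
      case True then show ?thesis using pv by simp
    next
      case iv: False
      show ?thesis
      proof (cases "i = x")
        case True
        have "\<exists>!q0. q0 \<in> insert q P' \<and> c i q0 = Some False"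
          using True xq fr1 by auto
        moreover have "\<forall>q0. c i q0 = Some True \<and> hasH c K q0 \<longrightarrow> q0 \<in> insert q P'"
          using True fr2 hK x by blast
        ultimately show ?thesis by blast
      next
        case ix: False
        have iq: "c i q \<noteq> Some False" using vo i vq ix by blast
        have i': "i \<in> K-{v}" using i iv by simp
        show ?thesis
        proof (cases "\<forall>q\<in>P'. c i q \<noteq> Some False")
          case True then show ?thesis using iq by simp
        next
          case False
          then have u: "\<exists>!q. q \<in> P' \<and> c i q = Some False"
            and ins: "\<forall>q. c i q = Some True \<and> hasH c (K-{v}) q \<longrightarrow> q \<in> P'"
            using gb i' by blast+
          have "\<exists>!q0. q0 \<in> insert q P' \<and> c i q0 = Some False"
            using u iq by auto
          moreover have "\<forall>q0. c i q0 = Some True \<and> hasH c K q0 \<longrightarrow> q0 \<in> insert q P'"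
            using ins hK i by blast
          ultimately show ?thesis by blast
        qed
      qed
    qed
  qed
  have pc: "\<forall>j\<in>K. \<forall>q1 q2. c j q1 = Some True \<and> c j q2 = Some True \<and> hasH c K q1 \<and> hasH c K q2
        \<and> q1 \<notin> insert q P' \<and> q2 \<notin> insert q P' \<longrightarrow> q1 = q2"
  proof (intro ballI allI impI)
    fix j q1 q2 assume j: "j \<in> K" and h: "c j q1 = Some True \<and> c j q2 = Some True \<and> hasH c K q1 \<and> hasH c K q2
        \<and> q1 \<notin> insert q P' \<and> q2 \<notin> insert q P'"
    show "q1 = q2"
    proof (cases "j = v")
      case True
      then show ?thesis using h vo unfolding hasH_def by blast
    next
      case False
      then show ?thesis using h hK[of q1 j] hK[of q2 j] j gc by blast
    qed
  qed
  have "free c K (insert q P') v"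
    unfolding free_def using pv vo unfolding hasH_def by blast
  then show ?thesis using pa pb pc unfolding goodP_def by blast
qed

lemma step_out:
  assumes H: "hyps c K" and v: "v \<in> K" and cp: "Cp c K v = {(w,q)}"
    and vq: "c v q = Some False" and wq: "c w q = Some True"
    and g: "goodP c (K-{v}) P'" and fr: "free c (K-{v}) P' w" and w: "w \<in> K"
  shows "goodP c K (P' - {q}) \<and> free c K (P' - {q}) v"
proof -
  have uo: "\<And>i i' q. i \<in> K \<Longrightarrow> i' \<in> K \<Longrightarrow> c i q = Some True \<Longrightarrow> c i' q = Some True \<Longrightarrow> i = i'"
    using H unfolding hyps_def by blast
  have vz: "ow = w \<and> q' = q" if "c v q' = Some False" "ow \<in> K" "c ow q' = Some True" for ow q'
  proof -
    have "ow \<noteq> v" using that by auto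
    then have "(ow,q') \<in> Cp c K v" using that unfolding Cp_def by auto
    then show ?thesis using cp by auto
  qed
  have vno: False if "c v q' = Some True" "h \<in> K" "c h q' = Some False" for h q'
  proof -
    have "h \<noteq> v" using that by auto
    then have "(h,q') \<in> Cp c K v" using that unfolding Cp_def by auto
    then show False using cp vq that by auto
  qed
  have hK: "hasH c (K-{v}) q'" if "hasH c K q'" "c j q' = Some True" "j \<in> K" "q' \<noteq> q" for q' j
    using that vz unfolding hasH_def by (metis Diff_iff singletonD)
  from g have ga: "\<forall>q\<in>P'. (\<exists>j\<in>K-{v}. c j q = Some True) \<and> (\<exists>!h. h \<in> K-{v} \<and> c h q = Some False)"
    and gb: "\<forall>i\<in>K-{v}. (\<forall>q\<in>P'. c i q \<noteq> Some False) \<or>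
        ((\<exists>!q. q \<in> P' \<and> c i q = Some False) \<and> (\<forall>q. c i q = Some True \<and> hasH c (K-{v}) q \<longrightarrow> q \<in> P'))"
    and gc: "\<forall>j\<in>K-{v}. \<forall>q1 q2. c j q1 = Some True \<and> c j q2 = Some True \<and> hasH c (K-{v}) q1 \<and> hasH c (K-{v}) q2
        \<and> q1 \<notin> P' \<and> q2 \<notin> P' \<longrightarrow> q1 = q2"
    unfolding goodP_def by blast+
  have fr1: "\<forall>q\<in>P'. c w q \<noteq> Some False" and fr2: "\<forall>q. c w q = Some True \<and> hasH c (K-{v}) q \<longrightarrow> q \<in> P'"
    using fr unfolding free_def by blast+
  have pv: "\<forall>q0\<in>P'-{q}. c v q0 \<noteq> Some False"
    using ga vz by fastforce
  have pa: "\<forall>q0\<in>P'-{q}. (\<exists>j\<in>K. c j q0 = Some True) \<and> (\<exists>!h. h \<in> K \<and> c h q0 = Some False)"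
  proof
    fix q0 assume q0: "q0 \<in> P'-{q}"
    then obtain j where j: "j \<in> K-{v}" "c j q0 = Some True" and u: "\<exists>!h. h \<in> K-{v} \<and> c h q0 = Some False"
      using ga by blast
    have "c v q0 \<noteq> Some False" using pv q0 by blast
    then have "(\<lambda>h. h \<in> K \<and> c h q0 = Some False) = (\<lambda>h. h \<in> K-{v} \<and> c h q0 = Some False)"
      by auto
    then show "(\<exists>j\<in>K. c j q0 = Some True) \<and> (\<exists>!h. h \<in> K \<and> c h q0 = Some False)" using j u by auto
  qed
  have pb: "\<forall>i\<in>K. (\<forall>q0\<in>P'-{q}. c i q0 \<noteq> Some False) \<or>
        ((\<exists>!q0. q0 \<in> P'-{q} \<and> c i q0 = Some False) \<and> (\<forall>q0. c i q0 = Some True \<and> hasH c K q0 \<longrightarrow> q0 \<in> P'-{q}))"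
  proof
    fix i assume i: "i \<in> K"
    show "(\<forall>q0\<in>P'-{q}. c i q0 \<noteq> Some False) \<or>
        ((\<exists>!q0. q0 \<in> P'-{q} \<and> c i q0 = Some False) \<and> (\<forall>q0. c i q0 = Some True \<and> hasH c K q0 \<longrightarrow> q0 \<in> P'-{q}))"
    proof (cases "i = v")
      case True then show ?thesis using pv by simp
    next
      case iv: False
      have i': "i \<in> K-{v}" using i iv by simp
      show ?thesis
      proof (cases "\<forall>q0\<in>P'-{q}. c i q0 \<noteq> Some False")
        case True then show ?thesis by simp
      next
        case False
        then obtain q0 where q0: "q0 \<in> P'-{q}" "c i q0 = Some False" by blast
        then have iw: "i \<noteq> w" using fr1 by blast
        have "\<not> (\<forall>q\<in>P'. c i q \<noteq> Some False)" using q0 by blast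
        then have u: "\<exists>!q. q \<in> P' \<and> c i q = Some False"
          and ins: "\<forall>q. c i q = Some True \<and> hasH c (K-{v}) q \<longrightarrow> q \<in> P'"
          using gb i' by blast+
        have "\<exists>!q0. q0 \<in> P'-{q} \<and> c i q0 = Some False"
          using u q0 by blast
        moreover have "\<forall>q0. c i q0 = Some True \<and> hasH c K q0 \<longrightarrow> q0 \<in> P'-{q}"
        proof (intro allI impI)
          fix q1 assume q1: "c i q1 = Some True \<and> hasH c K q1"
          have "q1 \<noteq> q" using q1 uo[OF i w] wq iw by blast
          then show "q1 \<in> P'-{q}" using ins hK[of q1 i] q1 i by blast
        qed
        ultimately show ?thesis by blast
      qed
    qed
  qed
  have pc: "\<forall>j\<in>K. \<forall>q1 q2. c j q1 = Some True \<and> c j q2 = Some True \<and> hasH c K q1 \<and> hasH c K q2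
        \<and> q1 \<notin> P'-{q} \<and> q2 \<notin> P'-{q} \<longrightarrow> q1 = q2"
  proof (intro ballI allI impI)
    fix j q1 q2 assume j: "j \<in> K" and h: "c j q1 = Some True \<and> c j q2 = Some True \<and> hasH c K q1 \<and> hasH c K q2
        \<and> q1 \<notin> P'-{q} \<and> q2 \<notin> P'-{q}"
    show "q1 = q2"
    proof (cases "j = v")
      case True
      then show ?thesis using h vno unfolding hasH_def by blast
    next
      case jv: False
      show ?thesis
      proof (cases "j = w")
        case True
        have "q1 = q" using h hK[of q1 j] j fr2 True by blast
        moreover have "q2 = q" using h hK[of q2 j] j fr2 True by blast
        ultimately show ?thesis by simp
      next
        case False
        have "q1 \<noteq> q" "q2 \<noteq> q" using h uo[OF j w] wq False by blast+
        then show ?thesis using h hK[of q1 j] hK[of q2 j] j jv gc by blast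
      qed
    qed
  qed
  have "free c K (P'-{q}) v"
    unfolding free_def using pv vno unfolding hasH_def by blast
  then show ?thesis using pa pb pc unfolding goodP_def by blast
qed

lemma step_L:
  assumes H: "hyps c K" and j: "j \<in> K" and qq: "q1 \<noteq> q2"
    and j1: "c j q1 = Some True" and j2: "c j q2 = Some True"
    and h1: "h1 \<in> K" "c h1 q1 = Some False" and h2: "h2 \<in> K" "c h2 q2 = Some False"
    and g: "goodP c (K-{j}) P'" and fr: "free c (K-{j}) P' h1"
  shows "goodP c K (insert q1 P')"
proof -
  have A: "(h1,q1) \<in> Cp c K j" using h1 j1 unfolding Cp_def by auto
  have B: "(h2,q2) \<in> Cp c K j" using h2 j2 unfolding Cp_def by auto
  have AB: "(h1,q1) \<noteq> (h2,q2)" using qq by simp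
  have jz: False if "c j q' = Some False" "ow \<in> K" "c ow q' = Some True" for q' ow
  proof -
    have "(ow,q') \<in> Cp c K j" using that unfolding Cp_def by auto
    moreover have "q' \<noteq> q1" "q' \<noteq> q2" using that j1 j2 by auto
    ultimately show False using three[OF H j A B _ AB] by blast
  qed
  have hol1: "h = h1" if "h \<in> K" "c h q1 = Some False" for h
  proof (rule ccontr)
    assume "h \<noteq> h1"
    moreover have "(h,q1) \<in> Cp c K j" using that j1 unfolding Cp_def by auto
    ultimately show False using three[OF H j A B _ AB] qq by blast
  qed
  have jo: "q' = q1 \<or> q' = q2" if "c j q' = Some True" "h \<in> K" "c h q' = Some False" for q' h
  proof (rule ccontr)
    assume "\<not> (q' = q1 \<or> q' = q2)"
    moreover have "(h,q') \<in> Cp c K j" using that unfolding Cp_def by auto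
    ultimately show False using three[OF H j A B _ AB] by blast
  qed
  have hK: "hasH c (K-{j}) q'" if "hasH c K q'" "c ow q' = Some True" "ow \<in> K" for q' ow
    using that jz unfolding hasH_def by (metis Diff_iff singletonD)
  from g have ga: "\<forall>q\<in>P'. (\<exists>j'\<in>K-{j}. c j' q = Some True) \<and> (\<exists>!h. h \<in> K-{j} \<and> c h q = Some False)"
    and gb: "\<forall>i\<in>K-{j}. (\<forall>q\<in>P'. c i q \<noteq> Some False) \<or>
        ((\<exists>!q. q \<in> P' \<and> c i q = Some False) \<and> (\<forall>q. c i q = Some True \<and> hasH c (K-{j}) q \<longrightarrow> q \<in> P'))"
    and gc: "\<forall>j'\<in>K-{j}. \<forall>q1 q2. c j' q1 = Some True \<and> c j' q2 = Some True \<and> hasH c (K-{j}) q1 \<and> hasH c (K-{j}) q2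
        \<and> q1 \<notin> P' \<and> q2 \<notin> P' \<longrightarrow> q1 = q2"
    unfolding goodP_def by blast+
  have fr1: "\<forall>q\<in>P'. c h1 q \<noteq> Some False" and fr2: "\<forall>q. c h1 q = Some True \<and> hasH c (K-{j}) q \<longrightarrow> q \<in> P'"
    using fr unfolding free_def by blast+
  have pj: "\<forall>q0\<in>insert q1 P'. c j q0 \<noteq> Some False"
    using j1 ga jz by fastforce
  have pa: "\<forall>q0\<in>insert q1 P'. (\<exists>j'\<in>K. c j' q0 = Some True) \<and> (\<exists>!h. h \<in> K \<and> c h q0 = Some False)"
  proof
    fix q0 assume q0: "q0 \<in> insert q1 P'"
    show "(\<exists>j'\<in>K. c j' q0 = Some True) \<and> (\<exists>!h. h \<in> K \<and> c h q0 = Some False)"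
    proof (cases "q0 = q1")
      case True
      then show ?thesis using j j1 h1 hol1 by metis
    next
      case False
      then have "q0 \<in> P'" using q0 by simp
      then obtain j' where j': "j' \<in> K-{j}" "c j' q0 = Some True" and u: "\<exists>!h. h \<in> K-{j} \<and> c h q0 = Some False"
        using ga by blast
      have "c j q0 \<noteq> Some False" using pj q0 by blast
      then have "(\<lambda>h. h \<in> K \<and> c h q0 = Some False) = (\<lambda>h. h \<in> K-{j} \<and> c h q0 = Some False)"
        by auto
      then show ?thesis using j' u by auto
    qed
  qed
  have pb: "\<forall>i\<in>K. (\<forall>q0\<in>insert q1 P'. c i q0 \<noteq> Some False) \<or>
        ((\<exists>!q0. q0 \<in> insert q1 P' \<and> c i q0 = Some False) \<and> (\<forall>q0. c i q0 = Some True \<and> hasH c K q0 \<longrightarrow> q0 \<in> insert q1 P'))"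
  proof
    fix i assume i: "i \<in> K"
    show "(\<forall>q0\<in>insert q1 P'. c i q0 \<noteq> Some False) \<or>
        ((\<exists>!q0. q0 \<in> insert q1 P' \<and> c i q0 = Some False) \<and> (\<forall>q0. c i q0 = Some True \<and> hasH c K q0 \<longrightarrow> q0 \<in> insert q1 P'))"
    proof (cases "i = j")
      case True then show ?thesis using pj by simp
    next
      case ij: False
      show ?thesis
      proof (cases "i = h1")
        case True
        have "\<exists>!q0. q0 \<in> insert q1 P' \<and> c i q0 = Some False"
          using True h1 fr1 by auto
        moreover have "\<forall>q0. c i q0 = Some True \<and> hasH c K q0 \<longrightarrow> q0 \<in> insert q1 P'"
          using True fr2 hK h1 by blast
        ultimately show ?thesis by blast
      next
        case ih: False
        have iq: "c i q1 \<noteq> Some False" using hol1 i ih by blast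
        have i': "i \<in> K-{j}" using i ij by simp
        show ?thesis
        proof (cases "\<forall>q\<in>P'. c i q \<noteq> Some False")
          case True then show ?thesis using iq by simp
        next
          case False
          then have u: "\<exists>!q. q \<in> P' \<and> c i q = Some False"
            and ins: "\<forall>q. c i q = Some True \<and> hasH c (K-{j}) q \<longrightarrow> q \<in> P'"
            using gb i' by blast+
          have "\<exists>!q0. q0 \<in> insert q1 P' \<and> c i q0 = Some False"
            using u iq by auto
          moreover have "\<forall>q0. c i q0 = Some True \<and> hasH c K q0 \<longrightarrow> q0 \<in> insert q1 P'"
            using ins hK i by blast
          ultimately show ?thesis by blast
        qed
      qed
    qed
  qed
  have pc: "\<forall>j'\<in>K. \<forall>qa qb. c j' qa = Some True \<and> c j' qb = Some True \<and> hasH c K qa \<and> hasH c K qb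
        \<and> qa \<notin> insert q1 P' \<and> qb \<notin> insert q1 P' \<longrightarrow> qa = qb"
  proof (intro ballI allI impI)
    fix j' qa qb assume j': "j' \<in> K" and h: "c j' qa = Some True \<and> c j' qb = Some True \<and> hasH c K qa \<and> hasH c K qb
        \<and> qa \<notin> insert q1 P' \<and> qb \<notin> insert q1 P'"
    show "qa = qb"
    proof (cases "j' = j")
      case True
      then show ?thesis using h jo unfolding hasH_def by (metis insertI1)
    next
      case False
      then show ?thesis using h hK[of qa j'] hK[of qb j'] j' gc by blast
    qed
  qed
  show ?thesis using pa pb pc unfolding goodP_def by blast
qed

lemma comb:
  "hyps c K \<Longrightarrow> (\<exists>P. goodP c K P) \<and> (\<forall>v\<in>K. card (Cp c K v) \<le> 1 \<longrightarrow> (\<exists>P. goodP c K P \<and> free c K P v))"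
proof (induction "card K" arbitrary: K rule: less_induct)
  case less
  have H: "hyps c K" by fact
  have fin: "finite K" using H unfolding hyps_def by simp
  have IH: "\<And>K'. K' \<subseteq> K \<Longrightarrow> card K' < card K \<Longrightarrow>
     (\<exists>P. goodP c K' P) \<and> (\<forall>v\<in>K'. card (Cp c K' v) \<le> 1 \<longrightarrow> (\<exists>P. goodP c K' P \<and> free c K' P v))"
    using less hyps_sub[OF H] by blast
  have L: "\<exists>P. goodP c K P"
  proof (cases "\<exists>j\<in>K. \<exists>q1 q2. c j q1 = Some True \<and> c j q2 = Some True \<and> hasH c K q1 \<and> hasH c K q2 \<and> q1 \<noteq> q2")
    case False
    then have "goodP c K {}" unfolding goodP_def by blast
    then show ?thesis by blast
  next
    case True
    then obtain j q1 q2 where j: "j \<in> K" and q: "c j q1 = Some True" "c j q2 = Some True" "hasH c K q1" "hasH c K q2" "q1 \<noteq> q2"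
      by blast
    obtain h1 h2 where h: "h1 \<in> K" "c h1 q1 = Some False" "h2 \<in> K" "c h2 q2 = Some False"
      using q unfolding hasH_def by blast
    have h1j: "h1 \<in> K - {j}" using h q j by auto
    have sub: "K - {j} \<subseteq> K" by auto
    have lt: "card (K - {j}) < card K" using fin j by (rule card_Diff1_less)
    have "(j,q1) \<in> Cp c K h1" using h q j unfolding Cp_def by auto
    then have "card (Cp c (K-{j}) h1) \<le> 1" using remove_le1[OF H h(1)] by blast
    then obtain P' where "goodP c (K-{j}) P'" "free c (K-{j}) P' h1"
      using IH[OF sub lt] h1j by blast
    then show ?thesis using step_L[OF H j q(5) q(1) q(2) h(1) h(2) h(3) h(4)] by blast
  qed
  have R: "\<exists>P. goodP c K P \<and> free c K P v" if v: "v \<in> K" and cv: "card (Cp c K v) \<le> 1" for v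
  proof (cases "Cp c K v = {}")
    case True
    then show ?thesis using L step_empty v by blast
  next
    case False
    then have "card (Cp c K v) \<noteq> 0" using Cp_fin[OF H v] by simp
    then have "card (Cp c K v) = 1" using cv by linarith
    then obtain z where "Cp c K v = {z}" by (rule card_1_singletonE)
    moreover obtain y q where "z = (y,q)" by (cases z)
    ultimately have yq: "Cp c K v = {(y,q)}" by simp
    then have "(y,q) \<in> Cp c K v" by simp
    then have y: "y \<in> K - {v}" and yc: "c v q = Some True \<and> c y q = Some False \<or> c v q = Some False \<and> c y q = Some True"
      unfolding Cp_def by auto
    have sub: "K - {v} \<subseteq> K" by auto
    have lt: "card (K - {v}) < card K" using fin v by (rule card_Diff1_less)
    have yK: "y \<in> K" using y by simp
    show ?thesis
    proof (cases "c v q = Some True")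
      case True
      then have yF: "c y q = Some False" using yc by auto
      have "(v,q) \<in> Cp c K y" using True yF y v unfolding Cp_def by auto
      then have "card (Cp c (K-{v}) y) \<le> 1" using remove_le1[OF H yK] by blast
      then obtain P' where "goodP c (K-{v}) P'" "free c (K-{v}) P' y"
        using IH[OF sub lt] y by blast
      then show ?thesis using step_in[OF H v yq True yF _ _ yK] by blast
    next
      case False
      then have vF: "c v q = Some False" and yT: "c y q = Some True" using yc by auto
      have "(v,q) \<in> Cp c K y" using vF yT y v unfolding Cp_def by auto
      then have "card (Cp c (K-{v}) y) \<le> 1" using remove_le1[OF H yK] by blast
      then obtain P' where "goodP c (K-{v}) P'" "free c (K-{v}) P' y"
        using IH[OF sub lt] y by blast
      then show ?thesis using step_out[OF H v yq vF yT _ _ yK] by blast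
    qed
  qed
  show ?case using L R by blast
qed

lemma agrees_set: "agrees (\<lambda>j. j \<in> S) d \<longleftrightarrow> (\<forall>q b. d q = Some b \<longrightarrow> (q \<in> S) = b)"
  unfolding agrees_def by simp

lemma flip_out: "p \<notin> T \<Longrightarrow> flip (\<lambda>j. j \<in> T) p = (\<lambda>j. j \<in> insert p T)"
  unfolding flip_def by (auto simp: fun_eq_iff)

lemma flip_in: "p \<in> T \<Longrightarrow> flip (\<lambda>j. j \<in> T) p = (\<lambda>j. j \<in> T - {p})"
  unfolding flip_def by (auto simp: fun_eq_iff)

lemma cube_set: "S \<subseteq> {..<n} \<Longrightarrow> (\<lambda>j. j \<in> S) \<in> cube n"
  unfolding cube_def by auto

theorem lemma3:
  fixes n k :: nat and f :: "(nat \<Rightarrow> bool) \<Rightarrow> bool"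
    and c :: "nat \<Rightarrow> (nat \<Rightarrow> bool option)"
  assumes f0: "\<not> f (\<lambda>_. False)"
    and cert: "\<forall>i<k. is_min_1cert n f (c i)"
    and dist: "inj_on c {..<k}"
    and contr: "\<forall>i<k. (\<Sum>j\<in>{..<k} - {i}. contradictions (c i) (c j)) \<le> 2"
    and ones: "\<forall>p<n. \<exists>!i. i < k \<and> c i p = Some True"
  shows "k \<le> s0 n f"
proof -
  define K where "K = {..<k::nat}"
  have dom: "\<And>i. i < k \<Longrightarrow> dom (c i) \<subseteq> {..<n}"
    using cert unfolding is_min_1cert_def is_1cert_def by blast
  have crt: "\<And>i y. i < k \<Longrightarrow> y \<in> cube n \<Longrightarrow> agrees y (c i) \<Longrightarrow> f y"
    using cert unfolding is_min_1cert_def is_1cert_def by blast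
  have qn: "\<And>i q b. i < k \<Longrightarrow> c i q = Some b \<Longrightarrow> q < n"
    using dom by blast
  have uo: "\<And>i i' q. i < k \<Longrightarrow> i' < k \<Longrightarrow> c i q = Some True \<Longrightarrow> c i' q = Some True \<Longrightarrow> i = i'"
    using ones qn by metis
  have cpc: "card (Cp c K i) \<le> 2" if i: "i \<in> K" for i
  proof -
    let ?B = "\<lambda>x. {q. c i q = Some True \<and> c x q = Some False \<or> c i q = Some False \<and> c x q = Some True}"
    have eq: "Cp c K i = (SIGMA x:K-{i}. ?B x)" unfolding Cp_def by auto
    have fB: "\<forall>x\<in>K-{i}. finite (?B x)"
    proof
      fix x
      have "?B x \<subseteq> {..<n}" using qn i unfolding K_def by auto
      then show "finite (?B x)" by (rule finite_subset) simp
    qed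
    have "card (Cp c K i) = (\<Sum>x\<in>K-{i}. card (?B x))"
      unfolding eq using fB by (simp add: K_def)
    also have "\<dots> = (\<Sum>x\<in>K-{i}. contradictions (c i) (c x))"
      unfolding contradictions_def by simp
    also have "\<dots> \<le> 2" using contr i unfolding K_def by simp
    finally show ?thesis .
  qed
  have H: "hyps c K"
    unfolding hyps_def
  proof (intro conjI)
    show "finite K" unfolding K_def by simp
    show "\<forall>i\<in>K. finite (dom (c i))" using dom unfolding K_def by (meson finite_lessThan finite_subset lessThan_iff)
    show "\<forall>i\<in>K. \<forall>i'\<in>K. \<forall>q. c i q = Some True \<longrightarrow> c i' q = Some True \<longrightarrow> i = i'"
      using uo unfolding K_def by blast
    show "\<forall>i\<in>K. card (Cp c K i) \<le> 2" using cpc by blast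
  qed
  obtain P where gP: "goodP c K P" using comb[OF H] by blast
  have ga: "\<forall>q\<in>P. (\<exists>j\<in>K. c j q = Some True) \<and> (\<exists>!h. h \<in> K \<and> c h q = Some False)"
    and gb: "\<forall>i\<in>K. (\<forall>q\<in>P. c i q \<noteq> Some False) \<or>
        ((\<exists>!q. q \<in> P \<and> c i q = Some False) \<and> (\<forall>q. c i q = Some True \<and> hasH c K q \<longrightarrow> q \<in> P))"
    and gc: "\<forall>j\<in>K. \<forall>q1 q2. c j q1 = Some True \<and> c j q2 = Some True \<and> hasH c K q1 \<and> hasH c K q2
        \<and> q1 \<notin> P \<and> q2 \<notin> P \<longrightarrow> q1 = q2"
    using gP unfolding goodP_def by blast+
  define R where "R = {q. q < n \<and> hasH c K q \<and> q \<notin> P}"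
  define A where "A = {..<n} - R"
  define Fam where "Fam = {T. T \<subseteq> A \<and> \<not> f (\<lambda>j. j \<in> T)}"
  have "Fam \<subseteq> Pow A" unfolding Fam_def by auto
  then have fFam: "finite Fam" unfolding A_def by (meson finite_Diff finite_Pow_iff finite_lessThan finite_subset)
  have "{} \<in> Fam" unfolding Fam_def using f0 by simp
  then obtain T where TF: "T \<in> Fam" and Tmax: "\<forall>T'\<in>Fam. T \<subseteq> T' \<longrightarrow> T = T'"
    using finite_has_maximal[OF fFam] by blast
  have TA: "T \<subseteq> A" and fT: "\<not> f (\<lambda>j. j \<in> T)" using TF unfolding Fam_def by auto
  have Tn: "T \<subseteq> {..<n}" using TA unfolding A_def by auto
  define x where "x = (\<lambda>j. j \<in> T)"
  have Zf: "q \<in> P" if "i < k" "c i q = Some False" "q \<in> T" for i q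
  proof -
    have "q < n" using qn that by blast
    moreover have "hasH c K q" using that unfolding hasH_def K_def by blast
    moreover have "q \<notin> R" using that TA unfolding A_def by auto
    ultimately show ?thesis unfolding R_def by blast
  qed
  define tag where "tag i p \<longleftrightarrow> (c i p = Some True \<and> p \<notin> T) \<or> (p \<in> T \<and> p \<in> P \<and> c i p = Some False)" for i p
  have key: "\<exists>p. p < n \<and> f (flip x p) \<noteq> f x \<and> tag i p" if i: "i < k" for i
  proof -
    have iK: "i \<in> K" using i unfolding K_def by simp
    show ?thesis
    proof (cases "\<exists>p. c i p = Some True \<and> p \<notin> T \<and> p \<notin> R")
      case True
      then obtain p where p: "c i p = Some True" "p \<notin> T" "p \<notin> R" by blast
      have pn: "p < n" using qn i p by blast
      have "insert p T \<subseteq> A" using TA pn p unfolding A_def by auto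
      moreover have "T \<noteq> insert p T" using p by auto
      ultimately have "f (\<lambda>j. j \<in> insert p T)" using Tmax unfolding Fam_def by blast
      then have "f (flip x p) \<noteq> f x" using flip_out[OF p(2)] fT unfolding x_def by simp
      then show ?thesis using pn p unfolding tag_def by blast
    next
      case C1: False
      show ?thesis
      proof (cases "\<exists>p. c i p = Some True \<and> p \<notin> T")
        case True
        then obtain p where p: "c i p = Some True" "p \<notin> T" by blast
        have pR: "p \<in> R" using C1 p by blast
        then have pH: "hasH c K p" and pP: "p \<notin> P" and pn: "p < n" unfolding R_def by auto
        have "agrees (\<lambda>j. j \<in> insert p T) (c i)"
          unfolding agrees_set
        proof (intro allI impI)
          fix q b assume qb: "c i q = Some b"
          show "(q \<in> insert p T) = b"
          proof (cases b)
            case True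
            show ?thesis
            proof (cases "q \<in> T")
              case False
              have cq: "c i q = Some True" using qb True by simp
              then have "q \<in> R" using C1 False by blast
              then have "hasH c K q" "q \<notin> P" unfolding R_def by auto
              then have "q = p" using gc iK p pH pP cq by blast
              then show ?thesis using True by simp
            qed (simp add: True)
          next
            case False
            have cq: "c i q = Some False" using qb False by simp
            have "q \<noteq> p" using p cq by auto
            moreover have "q \<notin> T"
            proof
              assume "q \<in> T"
              then have "q \<in> P" using Zf[OF i cq] by blast
              then show False using gb[rule_format, OF iK] cq p(1) pH pP by blast
            qed
            ultimately show ?thesis using False by simp
          qed
        qed
        moreover have "insert p T \<subseteq> {..<n}" using Tn pn by simp
        ultimately have "f (\<lambda>j. j \<in> insert p T)" using crt i cube_set by blast
        then have "f (flip x p) \<noteq> f x" using flip_out[OF p(2)] fT unfolding x_def by simp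
        then show ?thesis using pn p unfolding tag_def by blast
      next
        case C2: False
        have "\<not> agrees x (c i)" using crt[OF i cube_set[OF Tn]] fT unfolding x_def by blast
        then obtain q b where qb: "c i q = Some b" "(q \<in> T) \<noteq> b" unfolding x_def agrees_set by blast
        have bF: "b = False" using C2 qb by (cases b) auto
        then have qT: "q \<in> T" using qb by simp
        have qP: "q \<in> P" using Zf i qb bF qT by blast
        have u: "\<exists>!q. q \<in> P \<and> c i q = Some False" using gb iK qP qb bF by blast
        have "agrees (\<lambda>j. j \<in> T - {q}) (c i)"
          unfolding agrees_set
        proof (intro allI impI)
          fix q' b' assume qb': "c i q' = Some b'"
          show "(q' \<in> T - {q}) = b'"
          proof (cases b')
            case True
            have "c i q' = Some True" using qb' True by simp
            then have "q' \<in> T" using C2 by blast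
            moreover have "q' \<noteq> q" using qb' qb bF True by auto
            ultimately show ?thesis using True by simp
          next
            case False
            have cq': "c i q' = Some False" using qb' False by simp
            have cq: "c i q = Some False" using qb bF by simp
            have "q' \<notin> T - {q}"
            proof
              assume a: "q' \<in> T - {q}"
              then have "q' \<in> P" using Zf[OF i cq'] by blast
              moreover have "q' \<noteq> q" using a by blast
              ultimately show False using u qP cq cq' by blast
            qed
            then show ?thesis using False by simp
          qed
        qed
        moreover have "T - {q} \<subseteq> {..<n}" using Tn by auto
        ultimately have "f (\<lambda>j. j \<in> T - {q})" using crt i cube_set by blast
        then have "f (flip x q) \<noteq> f x" using flip_in[OF qT] fT unfolding x_def by simp
        moreover have "q < n" using qT Tn by auto
        ultimately show ?thesis using qT qP qb bF unfolding tag_def by blast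
      qed
    qed
  qed
  define s where "s i = (SOME p. p < n \<and> f (flip x p) \<noteq> f x \<and> tag i p)" for i
  have s: "s i < n \<and> f (flip x (s i)) \<noteq> f x \<and> tag i (s i)" if "i < k" for i
    unfolding s_def using key[OF that] by (rule someI_ex)
  have inj: "inj_on s {..<k}"
  proof (rule inj_onI)
    fix i i' assume ii: "i \<in> {..<k}" "i' \<in> {..<k}" "s i = s i'"
    have t1: "tag i (s i)" using s[of i] ii(1) by simp
    have "tag i' (s i')" using s[of i'] ii(2) by simp
    then have t2: "tag i' (s i)" using ii(3) by simp
    show "i = i'"
      using t1 t2 unfolding tag_def
    proof (elim disjE conjE)
      assume "c i (s i) = Some True" "c i' (s i) = Some True"
      then show "i = i'" using uo ii by simp
    next
      assume a: "s i \<in> P" "c i (s i) = Some False" "c i' (s i) = Some False"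
      obtain h where "h \<in> K \<and> c h (s i) = Some False" "\<forall>h'. h' \<in> K \<and> c h' (s i) = Some False \<longrightarrow> h' = h"
        using ga a(1) by metis
      then show "i = i'" using a ii unfolding K_def by auto
    qed auto
  qed
  define Sens where "Sens = {p \<in> {..<n}. f (flip x p) \<noteq> f x}"
  have "s ` {..<k} \<subseteq> Sens" using s unfolding Sens_def by auto
  then have kS: "k \<le> card Sens" using card_inj_on_le[OF inj] unfolding Sens_def by simp
  define M where "M = {card {i\<in>{..<n}. f (flip y i) \<noteq> f y} | y. y \<in> cube n \<and> \<not> f y}"
  have xc: "x \<in> cube n" "\<not> f x" using cube_set[OF Tn] fT unfolding x_def by auto
  have "card Sens \<in> M" unfolding M_def Sens_def
    by (rule CollectI, rule exI[of _ x]) (simp add: xc)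
  moreover have "finite M"
  proof -
    have "M \<subseteq> {..n}"
    proof
      fix z assume "z \<in> M"
      then obtain y where z: "z = card {i\<in>{..<n}. f (flip y i) \<noteq> f y}" unfolding M_def by blast
      have "card {i\<in>{..<n}. f (flip y i) \<noteq> f y} \<le> card {..<n}" by (rule card_mono) auto
      then show "z \<in> {..n}" using z by simp
    qed
    then show ?thesis by (rule finite_subset) simp
  qed
  ultimately have "card Sens \<le> Max M" by (rule Max_ge[rotated])
  then show ?thesis using kS unfolding s0_def M_def by simp
qed

end
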